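(* Let $m,n$ be positive integers and let $u\in\{1,s_0,\dots,s_{m-1},t_1,\dots,t_{n-2}\}$. Then $$\deg_u(1)\le\deg_u(x_1)\le\dots\le\deg_u(x_{m-1})\le\deg_u(y_1)\le\dots\le\deg_u(y_{n-1})\le\deg_u(x_1y_1)\le\deg_u(x_1y_2)\le\dots\le\deg_u(x_1y_{n-1})\le\deg_u(x_2y_1)\le\dots\le\deg_u(x_{m-1}y_{n-1}).$$
   Context: Variables $s_0,\dots,s_{m-1},t_1,\dots,t_{n-2}$; $T=t_1\cdots t_{n-2}$. Monomials $x_i=s_1s_2\cdots s_i\,T^i$ for $1\le i\le m-1$ and $y_j=s_0s_1\cdots s_{m-1}\,T^{m-1}\,t_1\cdots t_{j-1}$ for $1\le j\le n-1$. For a monomial $M$ and a variable $u$, $\deg_u(M)$ is the exponent of $u$ in $M$ (and $\deg_1(M)$ is taken to be $0$). The products $x_iy_j$ are listed in lexicographic order of $(i,j)$. *)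

theory Defs
  imports Main
begin

text \<open>Variables: One stands for the symbol 1 (with deg_1 = 0), S k for s_k, T l for t_l.
  Monomials are represented by their exponent vectors (var => nat); product = pointwise sum.\<close>

datatype var = One | S nat | T nat

type_synonym monomial = "var \<Rightarrow> nat"

definition mono_one :: monomial where
  "mono_one = (\<lambda>_. 0)"

definition mono_mult :: "monomial \<Rightarrow> monomial \<Rightarrow> monomial" where
  "mono_mult M N = (\<lambda>v. M v + N v)"

text \<open>x_i = s_1 ... s_i T^i with T = t_1 ... t_{n-2}.\<close>
definition xmon :: "nat \<Rightarrow> nat \<Rightarrow> monomial" where
  "xmon n i v = (case v of
      One \<Rightarrow> 0
    | S k \<Rightarrow> (if 1 \<le> k \<and> k \<le> i then 1 else 0)
    | T l \<Rightarrow> (if 1 \<le> l \<and> l \<le> n - 2 then i else 0))"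

text \<open>y_j = s_0 s_1 ... s_{m-1} T^{m-1} t_1 ... t_{j-1}.\<close>
definition ymon :: "nat \<Rightarrow> nat \<Rightarrow> nat \<Rightarrow> monomial" where
  "ymon m n j v = (case v of
      One \<Rightarrow> 0
    | S k \<Rightarrow> (if k \<le> m - 1 then 1 else 0)
    | T l \<Rightarrow> (if 1 \<le> l \<and> l \<le> n - 2
               then (m - 1) + (if l \<le> j - 1 then 1 else 0) else 0))"

definition deg :: "var \<Rightarrow> monomial \<Rightarrow> nat" where
  "deg u M = (case u of One \<Rightarrow> 0 | _ \<Rightarrow> M u)"

definition mono_list :: "nat \<Rightarrow> nat \<Rightarrow> monomial list" where
  "mono_list m n =
     [mono_one] @ map (xmon n) [1..<m] @ map (ymon m n) [1..<n]
     @ [mono_mult (xmon n i) (ymon m n j). i \<leftarrow> [1..<m], j \<leftarrow> [1..<n]]"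

definition admissible_vars :: "nat \<Rightarrow> nat \<Rightarrow> var set" where
  "admissible_vars m n = {One} \<union> {S k | k. k < m} \<union> {T l | l. 1 \<le> l \<and> l \<le> n - 2}"

end

theory Submission
  imports Defs
begin

lemma sorted_concat_map:
  "sorted_wrt (\<lambda>i i'. \<forall>x\<in>set (g i). \<forall>y\<in>set (g i'). x \<le> y) l \<Longrightarrow> (\<forall>i\<in>set l. sorted (g i))
   \<Longrightarrow> sorted (concat (map g (l::nat list)) :: nat list)"
  by (induct l) (auto simp: sorted_append)

lemma sorted_wrt_upt_gen:
  "(\<And>i j. a \<le> i \<Longrightarrow> i < j \<Longrightarrow> j < b \<Longrightarrow> P i j) \<Longrightarrow> sorted_wrt P [a..<b]"
  by (auto simp: sorted_wrt_iff_nth_less)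

lemma generic:
  fixes a b :: "nat \<Rightarrow> nat"
  assumes am: "\<And>i i'. 1 \<le> i \<Longrightarrow> i < i' \<Longrightarrow> i' < m \<Longrightarrow> a i \<le> a i'"
    and bm: "\<And>j j'. 1 \<le> j \<Longrightarrow> j < j' \<Longrightarrow> j' < n \<Longrightarrow> b j \<le> b j'"
    and ab: "\<And>i j. 1 \<le> i \<Longrightarrow> i < m \<Longrightarrow> 1 \<le> j \<Longrightarrow> j < n \<Longrightarrow> a i \<le> b j"
    and bp: "\<And>i j j'. 1 \<le> i \<Longrightarrow> i < m \<Longrightarrow> 1 \<le> j \<Longrightarrow> j < n \<Longrightarrow> 1 \<le> j' \<Longrightarrow> j' < n \<Longrightarrow> b j \<le> a i + b j'"
    and pp: "\<And>i i' j j'. 1 \<le> i \<Longrightarrow> i < i' \<Longrightarrow> i' < m \<Longrightarrow> 1 \<le> j \<Longrightarrow> j < n \<Longrightarrow> 1 \<le> j' \<Longrightarrow> j' < n \<Longrightarrow> a i + b j \<le> a i' + b j'"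
  shows "sorted ([0] @ map a [1..<m] @ map b [1..<n] @ concat (map (\<lambda>i. map (\<lambda>j. a i + b j) [1..<n]) [1..<m]))"
proof -
  have s1: "sorted (map a [1..<m])" unfolding sorted_map by (rule sorted_wrt_upt_gen) (simp add: am)
  have s2: "sorted (map b [1..<n])" unfolding sorted_map by (rule sorted_wrt_upt_gen) (simp add: bm)
  have s3: "sorted (concat (map (\<lambda>i. map (\<lambda>j. a i + b j) [1..<n]) [1..<m]))"
    apply (rule sorted_concat_map)
     apply (rule sorted_wrt_upt_gen) apply (auto intro: pp)[1]
    apply (auto simp: sorted_map intro!: sorted_wrt_upt_gen bm)
    done
  show ?thesis using s1 s2 s3
    by (auto simp: sorted_append intro: ab bp order_trans[OF ab le_add2] )
qed

theorem mainTheorem18: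
  fixes m n :: nat and u :: var
  assumes "0 < m" and "0 < n" and "u \<in> admissible_vars m n"
  shows "sorted (map (deg u) (mono_list m n))"
proof (cases "u = One")
  case True
  then show ?thesis by (simp add: deg_def sorted_wrt_iff_nth_less)
next
  case False
  have eq: "map (deg u) (mono_list m n) = [0] @ map (\<lambda>i. xmon n i u) [1..<m] @ map (\<lambda>j. ymon m n j u) [1..<n]
     @ concat (map (\<lambda>i. map (\<lambda>j. xmon n i u + ymon m n j u) [1..<n]) [1..<m])"
    using False by (cases u) (simp_all add: mono_list_def deg_def mono_one_def mono_mult_def map_concat comp_def)
  show ?thesis unfolding eq
  proof (rule generic)
  qed (use assms False in \<open>auto simp: admissible_vars_def xmon_def ymon_def split: if_splits\<close>)
qed

end
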